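(* Let $M_\sharp=X_\sharp X_\sharp^\top$ with $X_\sharp\in\mathbb{R}^{d\times r}$ of rank $r$, let $\mathcal{A}\colon\mathbb{R}^{d\times d}\to\mathbb{R}^m$ be linear and $b\in\mathbb{R}^m$. Suppose there exist a set $\mathcal{I}\subset\{1,\dots,m\}$ and a constant $\kappa_3>0$ such that (i) $b_i=\mathcal{A}(M_\sharp)_i$ for all $i\notin\mathcal{I}$, and (ii) for every $W\in\mathbb{R}^{d\times d}$ of rank at most $2r$, $$\kappa_3\|W\|_F\le\frac1m\|\mathcal{A}_{\mathcal{I}^c}(W)\|_1-\frac1m\|\mathcal{A}_{\mathcal{I}}(W)\|_1.$$ Let $f(X)=\frac1m\|\mathcal{A}(XX^\top)-b\|_1$ for $X\in\mathbb{R}^{d\times r}$. Then for all $X\in\mathbb{R}^{d\times r}$, $$f(X)-f(X_\sharp)\ge\kappa_3\sqrt{2(\sqrt2-1)}\,\sigma_r(X_\sharp)\,\mathrm{dist}\big(X,\mathcal{D}^*(M_\sharp)\big).$$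
   Context: For $\mathcal{J}\subset\{1,\dots,m\}$, $\mathcal{A}_{\mathcal{J}}(W)=(\mathcal{A}(W)_i)_{i\in\mathcal{J}}$, and $\mathcal{I}^c$ is the complement of $\mathcal{I}$. $\mathcal{D}^*(M_\sharp)=\{X_\sharp R:R\in O(r)\}$, where $O(r)$ is the orthogonal group, and $\mathrm{dist}$ is Frobenius distance. $\sigma_r$ denotes the $r$-th largest singular value. *)

theory Defs
  imports "HOL-Analysis.Analysis"
begin

definition mat_eigenvalues :: "real^'n^'n \<Rightarrow> real set" where
  "mat_eigenvalues A = {c. \<exists>v. v \<noteq> 0 \<and> A *v v = c *\<^sub>R v}"

text \<open>For a d x r matrix X (columns indexed by 'r), the singular values are the square
  roots of the r eigenvalues (with multiplicity) of X^T X; the r-th largest one is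
  therefore the square root of the smallest eigenvalue of X^T X.\<close>
definition sigma_r :: "real^'r^'d \<Rightarrow> real" where
  "sigma_r X = sqrt (Min (mat_eigenvalues (transpose X ** X)))"

definition l1_on :: "'m set \<Rightarrow> real^'m \<Rightarrow> real" where
  "l1_on J y = (\<Sum>i\<in>J. \<bar>y $ i\<bar>)"

definition sol_set :: "real^'r^'d \<Rightarrow> (real^'r^'d) set" where
  "sol_set Xs = {Xs ** R | R. orthogonal_matrix R}"

definition obj_f :: "(real^'d^'d \<Rightarrow> real^'m) \<Rightarrow> real^'m \<Rightarrow> real^'r^'d \<Rightarrow> real" where
  "obj_f A b X = (1 / real CARD('m)) * l1_on UNIV (A (X ** transpose X) - b)"

end

theory Submission
  imports Defs
begin

lemma sum3_swap: fixes f :: "'a \<Rightarrow> 'b \<Rightarrow> 'c \<Rightarrow> real"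
  assumes "finite A" "finite B" "finite C"
  shows "(\<Sum>i\<in>A. \<Sum>j\<in>B. \<Sum>k\<in>C. f i j k) = (\<Sum>k\<in>C. \<Sum>j\<in>B. \<Sum>i\<in>A. f i j k)"
proof -
  have "(\<Sum>i\<in>A. \<Sum>j\<in>B. \<Sum>k\<in>C. f i j k) = (\<Sum>i\<in>A. \<Sum>k\<in>C. \<Sum>j\<in>B. f i j k)"
    by (rule sum.cong[OF refl], rule sum.swap)
  also have "\<dots> = (\<Sum>k\<in>C. \<Sum>i\<in>A. \<Sum>j\<in>B. f i j k)" by (rule sum.swap)
  also have "\<dots> = (\<Sum>k\<in>C. \<Sum>j\<in>B. \<Sum>i\<in>A. f i j k)"
    by (rule sum.cong[OF refl], rule sum.swap)
  finally show ?thesis .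
qed

lemma frob_inner: "inner (A::real^'n^'m) B = (\<Sum>i\<in>UNIV. \<Sum>j\<in>UNIV. A$i$j * B$i$j)"
  by (simp add: inner_vec_def)

lemma adj1: fixes A :: "real^'k^'m" and B :: "real^'n^'k" and C :: "real^'n^'m"
  shows "inner (A ** B) C = inner B (transpose A ** C)"
proof -
  have "inner (A ** B) C = (\<Sum>i\<in>UNIV. \<Sum>j\<in>UNIV. \<Sum>k\<in>UNIV. A$i$k * B$k$j * C$i$j)"
    by (simp add: frob_inner matrix_matrix_mult_def sum_distrib_right)
  also have "\<dots> = (\<Sum>k\<in>UNIV. \<Sum>j\<in>UNIV. \<Sum>i\<in>UNIV. A$i$k * B$k$j * C$i$j)"
    by (rule sum3_swap) auto
  also have "\<dots> = inner B (transpose A ** C)"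
    by (simp add: frob_inner matrix_matrix_mult_def transpose_def sum_distrib_left mult_ac)
  finally show ?thesis .
qed

lemma adj2: fixes A :: "real^'k^'m" and B :: "real^'n^'k" and C :: "real^'n^'m"
  shows "inner (A ** B) C = inner A (C ** transpose B)"
proof -
  have "inner (A ** B) C = (\<Sum>i\<in>UNIV. \<Sum>j\<in>UNIV. \<Sum>k\<in>UNIV. A$i$k * B$k$j * C$i$j)"
    by (simp add: frob_inner matrix_matrix_mult_def sum_distrib_right)
  also have "\<dots> = (\<Sum>i\<in>UNIV. \<Sum>k\<in>UNIV. \<Sum>j\<in>UNIV. A$i$k * B$k$j * C$i$j)"
    by (rule sum.cong[OF refl], rule sum.swap)
  also have "\<dots> = inner A (C ** transpose B)"
    by (simp add: frob_inner matrix_matrix_mult_def transpose_def sum_distrib_left mult_ac)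
  finally show ?thesis .
qed

lemma inner_transpose: "inner (transpose (A::real^'n^'m)) (transpose B) = inner A B"
  unfolding frob_inner transpose_def by (simp, rule sum.swap)

lemma quad: fixes D :: "real^'r^'d" and Q :: "real^'r^'r"
  shows "inner Q (transpose D ** D) = (\<Sum>a\<in>UNIV. inner (D$a) (Q *v (D$a)))"
proof -
  have "inner Q (transpose D ** D) = (\<Sum>i\<in>UNIV. \<Sum>j\<in>UNIV. \<Sum>a\<in>UNIV. Q$i$j * (D$a$i * D$a$j))"
    by (simp add: frob_inner matrix_matrix_mult_def transpose_def sum_distrib_left)
  also have "\<dots> = (\<Sum>a\<in>UNIV. \<Sum>j\<in>UNIV. \<Sum>i\<in>UNIV. Q$i$j * (D$a$i * D$a$j))"
    by (rule sum3_swap) auto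
  also have "\<dots> = (\<Sum>a\<in>UNIV. \<Sum>i\<in>UNIV. \<Sum>j\<in>UNIV. Q$i$j * (D$a$i * D$a$j))"
    by (rule sum.cong[OF refl], rule sum.swap)
  also have "\<dots> = (\<Sum>a\<in>UNIV. inner (D$a) (Q *v (D$a)))"
    by (simp add: inner_vec_def matrix_vector_mult_def sum_distrib_left mult_ac)
  finally show ?thesis .
qed

lemma matrix_inner: "inner (matrix f :: real^'n^'n) P = (\<Sum>j\<in>UNIV. inner (f (axis j 1)) (P *v axis j 1))"
  unfolding frob_inner by (simp add: inner_vec_def matrix_def matrix_vector_mult_basis column_def, rule sum.swap)

lemma matrix_add_rdistrib': "((A::real^'k^'m) + B) ** (C::real^'n^'k) = A ** C + B ** C"
  by (simp add: matrix_matrix_mult_def vec_eq_iff distrib_right sum.distrib)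

lemma transpose_add': "transpose ((A::real^'n^'m) + B) = transpose A + transpose B"
  by (simp add: transpose_def vec_eq_iff)

lemma arith_final: fixes g k s x mu dd r :: real
  assumes "r*r = 2" "0 \<le> r" "r \<le> 2" "0 \<le> g + x" "mu*dd \<le> g" "0 \<le> 2 * s + 2*r*x + k"
  shows "2*(r-1)*mu*dd \<le> 2*g + k + 2 * s + 4*x"
proof -
  have "1 \<le> r" using assms(1,2) by (smt (verit) mult_le_one)
  then have a: "(2*r-2)*(mu*dd) \<le> (2*r-2)*g" using assms(5) by (intro mult_left_mono) auto
  have b: "0 \<le> (4-2*r)*(g+x)" using assms(3,4) by simp
  have "2*(r-1)*mu*dd = (2*r-2)*(mu*dd)" by (simp add: algebra_simps)
  also have "\<dots> \<le> (2*r-2)*g" by (rule a)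
  also have "\<dots> \<le> (2*r-2)*g + (4-2*r)*(g+x) + (2 * s + 2*r*x + k)" using b assms(6) by simp
  also have "\<dots> = 2*g + k + 2 * s + 4*x" by (simp add: algebra_simps)
  finally show ?thesis .
qed

lemma key_ineq:
  fixes U D :: "real^'r^'d" and \<mu> :: real
  assumes Ssym: "transpose (transpose U ** D) = transpose U ** D"
    and psd: "\<And>v. 0 \<le> inner v ((transpose U ** (U + D)) *v v)"
    and ray: "\<And>v. \<mu> * inner v v \<le> inner (U *v v) (U *v v)"
  shows "2 * (sqrt 2 - 1) * \<mu> * inner D D \<le>
     inner ((U + D) ** transpose (U + D) - U ** transpose U) ((U + D) ** transpose (U + D) - U ** transpose U)"
proof -
  define A1 where "A1 = U ** transpose D"
  define C1 where "C1 = D ** transpose D"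
  define G where "G = transpose U ** U"
  define K where "K = transpose D ** D"
  define S where "S = transpose U ** D"
  have B1: "D ** transpose U = transpose A1"
    unfolding A1_def matrix_transpose_mul transpose_transpose ..
  have E: "(U + D) ** transpose (U + D) - U ** transpose U = A1 + transpose A1 + C1"
    unfolding B1[symmetric] A1_def C1_def
    by (simp add: transpose_add' matrix_add_ldistrib matrix_add_rdistrib' matrix_transpose_mul algebra_simps)
  have C1t: "transpose C1 = C1" by (simp add: C1_def matrix_transpose_mul)
  have St: "transpose S = S" using Ssym by (simp add: S_def)
  have t1: "inner A1 A1 = inner G K"
  proof -
    have "inner A1 A1 = inner U (A1 ** D)" by (simp add: A1_def adj2)
    also have "\<dots> = inner U (U ** K)" by (simp add: A1_def K_def matrix_mul_assoc)
    also have "\<dots> = inner G K" using adj1[of "transpose U" U K] by (simp add: G_def)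
    finally show ?thesis .
  qed
  have t2: "inner A1 (transpose A1) = inner S S"
  proof -
    have "inner A1 (transpose A1) = inner U (D ** transpose U ** D)"
      by (simp add: A1_def adj2 matrix_transpose_mul)
    also have "\<dots> = inner U (D ** S)" by (simp add: S_def matrix_mul_assoc)
    also have "\<dots> = inner (transpose D ** U) S" by (simp add: adj1)
    also have "transpose D ** U = transpose S" by (simp add: S_def matrix_transpose_mul)
    finally show ?thesis using St by simp
  qed
  have t3: "inner A1 C1 = inner S K"
  proof -
    have "inner A1 C1 = inner U (D ** transpose D ** D)"
      by (simp add: A1_def C1_def adj2)
    also have "\<dots> = inner U (D ** K)" by (simp add: K_def matrix_mul_assoc)
    also have "\<dots> = inner (transpose D ** U) K" by (simp add: adj1)
    also have "transpose D ** U = transpose S" by (simp add: S_def matrix_transpose_mul)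
    finally show ?thesis using St by simp
  qed
  have t4: "inner C1 C1 = inner K K"
  proof -
    have "inner C1 C1 = inner D (D ** transpose D ** D)"
      by (simp add: C1_def adj2)
    also have "\<dots> = inner D (D ** K)" by (simp add: K_def matrix_mul_assoc)
    also have "\<dots> = inner (transpose D ** D) K" by (simp add: adj1)
    finally show ?thesis by (simp add: K_def)
  qed
  have t5: "inner (transpose A1) C1 = inner A1 C1"
    using inner_transpose[of A1 C1] C1t by simp
  have t6: "inner (transpose A1) (transpose A1) = inner A1 A1"
    by (rule inner_transpose)
  have EE: "inner (A1 + transpose A1 + C1) (A1 + transpose A1 + C1)
      = 2 * inner G K + inner K K + 2 * inner S S + 4 * inner S K"
    using t1 t2 t3 t4 t5 t6
    by (simp add: inner_add_left inner_add_right inner_commute[of "transpose A1" A1]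
        inner_commute[of C1 A1] inner_commute[of C1 "transpose A1"])
  have PK: "0 \<le> inner G K + inner S K"
  proof -
    have "transpose U ** (U + D) = G + S" by (simp add: G_def S_def matrix_add_ldistrib)
    then have "inner (G + S) K = (\<Sum>a\<in>UNIV. inner (D$a) ((transpose U ** (U + D)) *v (D$a)))"
      by (simp add: K_def quad)
    also have "\<dots> \<ge> 0" by (rule sum_nonneg, rule psd)
    finally show ?thesis by (simp add: inner_add_left)
  qed
  have GK: "\<mu> * inner D D \<le> inner G K"
  proof -
    have "inner G K = (\<Sum>a\<in>UNIV. inner (D$a) (G *v (D$a)))" by (simp add: K_def quad)
    also have "\<dots> = (\<Sum>a\<in>UNIV. inner (U *v (D$a)) (U *v (D$a)))"
      by (simp add: G_def matrix_vector_mul_assoc[symmetric] dot_lmul_matrix[symmetric] inner_commute)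
    also have "\<dots> \<ge> (\<Sum>a\<in>UNIV. \<mu> * inner (D$a) (D$a))" by (rule sum_mono, rule ray)
    finally show ?thesis by (simp add: inner_vec_def[of D D] sum_distrib_left)
  qed
  have sq: "0 \<le> inner (sqrt 2 *\<^sub>R S + K) (sqrt 2 *\<^sub>R S + K)" by simp
  have sq2: "inner (sqrt 2 *\<^sub>R S + K) (sqrt 2 *\<^sub>R S + K) = 2 * inner S S + 2 * sqrt 2 * inner S K + inner K K"
  proof -
    have "inner (sqrt 2 *\<^sub>R S + K) (sqrt 2 *\<^sub>R S + K) = sqrt 2 * (sqrt 2 * inner S S + inner S K) + (sqrt 2 * inner S K + inner K K)"
      by (simp add: inner_add_left inner_add_right inner_commute[of K S])
    also have "\<dots> = (sqrt 2 * sqrt 2) * inner S S + 2 * sqrt 2 * inner S K + inner K K"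
      by (simp only: distrib_left mult.assoc)
    finally show ?thesis by simp
  qed
  have r2: "sqrt 2 \<le> 2" using real_sqrt_le_mono[of 2 4] by simp
  have "2 * (sqrt 2 - 1) * \<mu> * inner D D \<le> 2 * inner G K + inner K K + 2 * inner S S + 4 * inner S K"
    by (rule arith_final[of "sqrt 2"]) (use PK GK r2 sq sq2 in auto)
  then show ?thesis using E EE by simp
qed


lemma lin_quad_zero: fixes c d :: real
  assumes "\<And>t. 0 \<le> t * c + t^2 * d" shows "c = 0"
proof (rule ccontr)
  assume "c \<noteq> 0"
  obtain e where e: "e = \<bar>d\<bar> + 1" by blast
  have pos: "e > 0" "d < e" using e by auto
  define t where "t = - c / e"
  have "t * c + t^2 * d = c^2 * (d - e) / e^2"
    using pos by (simp add: t_def field_simps power2_eq_square)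
  moreover have "c^2 * (d - e) < 0"
    using \<open>c \<noteq> 0\<close> pos by (intro mult_pos_neg) auto
  ultimately have "t * c + t^2 * d < 0" using pos by (simp add: divide_neg_pos)
  with assms[of t] show False by simp
qed

lemma gram_sym: "inner ((transpose X ** X) *v v) w = inner (X *v v) (X *v (w::real^'r))"
  for X :: "real^'r^'d"
  by (simp add: matrix_vector_mul_assoc[symmetric] dot_lmul_matrix)

lemma inner_sq_exp: "inner (a + t *\<^sub>R b) (a + t *\<^sub>R b) = inner a a + 2*t*inner a b + t^2 * inner b b"
  for a b :: "'a::real_inner"
  by (simp add: inner_add_left inner_add_right inner_commute[of b a] power2_eq_square distrib_left)

lemma rayleigh:
  fixes X :: "real^'r^'d"
  defines "\<mu> \<equiv> Min (mat_eigenvalues (transpose X ** X))"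
  shows "0 \<le> \<mu>" "\<And>v. \<mu> * inner v v \<le> inner (X *v v) (X *v v)"
proof -
  define G where "G = transpose X ** X"
  define h where "h = (\<lambda>v. inner (X *v v) (X *v v))"
  have hG: "\<And>v w. inner (G *v v) w = inner (X *v v) (X *v w)" by (simp add: G_def gram_sym)
  have cont: "continuous_on (sphere (0::real^'r) 1) h"
    unfolding h_def by (intro continuous_intros)
  have ne: "sphere (0::real^'r) 1 \<noteq> {}"
  proof -
    have "axis undefined 1 \<in> sphere (0::real^'r) 1" by simp
    then show ?thesis by blast
  qed
  obtain w0 where w0: "w0 \<in> sphere 0 1" and w0min: "\<And>w. w \<in> sphere 0 1 \<Longrightarrow> h w0 \<le> h w"
    using continuous_attains_inf[OF compact_sphere ne cont] by blast
  define lam where "lam = h w0"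
  have w0n: "inner w0 w0 = 1" using w0 by (simp add: dot_square_norm)
  have hscale: "\<And>c v. h (c *\<^sub>R v) = c^2 * h v"
    by (simp add: h_def matrix_vector_mult_scaleR power2_eq_square)
  have lam: "\<And>v. lam * inner v v \<le> h v"
  proof -
    fix v :: "real^'r"
    show "lam * inner v v \<le> h v"
    proof (cases "v = 0")
      case True then show ?thesis by (simp add: h_def)
    next
      case False
      then have np: "norm v > 0" by simp
      have sph: "(inverse (norm v)) *\<^sub>R v \<in> sphere 0 1" using np by simp
      have "lam \<le> (inverse (norm v))^2 * h v" unfolding lam_def using w0min[OF sph] hscale[of "inverse (norm v)" v] by simp
      then have "lam * (norm v)^2 \<le> h v" using np by (simp add: field_simps power2_eq_square)
      then show ?thesis by (simp add: dot_square_norm)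
    qed
  qed
  have eig: "G *v w0 = lam *\<^sub>R w0"
  proof -
    have "\<And>z. inner (X *v w0) (X *v z) = lam * inner w0 z"
    proof -
      fix z :: "real^'r"
      have "\<And>t. 0 \<le> t * (2 * (inner (X *v w0) (X *v z) - lam * inner w0 z)) + t^2 * (h z - lam * inner z z)"
      proof -
        fix t :: real
        have "lam * inner (w0 + t *\<^sub>R z) (w0 + t *\<^sub>R z) \<le> h (w0 + t *\<^sub>R z)" by (rule lam)
        moreover have "h (w0 + t *\<^sub>R z) = h w0 + 2*t*inner (X *v w0) (X *v z) + t^2 * h z"
          unfolding h_def by (simp add: matrix_vector_right_distrib matrix_vector_mult_scaleR inner_sq_exp)
        moreover have "inner (w0 + t *\<^sub>R z) (w0 + t *\<^sub>R z) = 1 + 2*t*inner w0 z + t^2 * inner z z"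
          using w0n by (simp add: inner_sq_exp)
        ultimately have "lam * (1 + 2*t*inner w0 z + t^2 * inner z z) \<le> lam + 2*t*inner (X *v w0) (X *v z) + t^2 * h z"
          by (simp add: lam_def)
        then show "0 \<le> t * (2 * (inner (X *v w0) (X *v z) - lam * inner w0 z)) + t^2 * (h z - lam * inner z z)"
          by (simp add: algebra_simps)
      qed
      from lin_quad_zero[OF this] show "inner (X *v w0) (X *v z) = lam * inner w0 z" by simp
    qed
    then have "\<And>z. inner (G *v w0 - lam *\<^sub>R w0) z = 0" by (simp add: inner_diff_left hG)
    then have "inner (G *v w0 - lam *\<^sub>R w0) (G *v w0 - lam *\<^sub>R w0) = 0" by blast
    then show ?thesis by simp
  qed
  have lamE: "lam \<in> mat_eigenvalues G"
  proof -
    have "w0 \<noteq> 0" using w0n by auto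
    then show ?thesis unfolding mat_eigenvalues_def using eig by blast
  qed
  have Enn: "\<And>c. c \<in> mat_eigenvalues G \<Longrightarrow> 0 \<le> c"
  proof -
    fix c assume "c \<in> mat_eigenvalues G"
    then obtain v where v: "v \<noteq> 0" "G *v v = c *\<^sub>R v" unfolding mat_eigenvalues_def by blast
    have "c * inner v v = inner (G *v v) v" using v by simp
    also have "\<dots> = h v" by (simp add: hG h_def)
    also have "\<dots> \<ge> 0" by (simp add: h_def)
    finally have "0 \<le> c * inner v v" .
    moreover have "inner v v > 0" using v by simp
    ultimately show "0 \<le> c" by (simp add: zero_le_mult_iff)
  qed
  have fin: "finite (mat_eigenvalues G)"
  proof -
    define E where "E = mat_eigenvalues G"
    define vec where "vec = (\<lambda>c. SOME v. v \<noteq> 0 \<and> G *v v = c *\<^sub>R v)"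
    have vec: "\<And>c. c \<in> E \<Longrightarrow> vec c \<noteq> 0 \<and> G *v vec c = c *\<^sub>R vec c"
    proof -
      fix c assume "c \<in> E"
      then have "\<exists>v. v \<noteq> 0 \<and> G *v v = c *\<^sub>R v" by (simp add: E_def mat_eigenvalues_def)
      then show "vec c \<noteq> 0 \<and> G *v vec c = c *\<^sub>R vec c" unfolding vec_def by (rule someI_ex)
    qed
    have inj: "inj_on vec E"
    proof (rule inj_onI)
      fix c d assume cd: "c \<in> E" "d \<in> E" "vec c = vec d"
      have "c *\<^sub>R vec c = G *v vec c" using vec[OF cd(1)] by simp
      also have "\<dots> = G *v vec d" using cd(3) by simp
      also have "\<dots> = d *\<^sub>R vec d" using vec[OF cd(2)] by simp
      finally have "c *\<^sub>R vec c = d *\<^sub>R vec c" using cd(3) by simp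
      then show "c = d" using vec[OF cd(1)] by (metis scaleR_cancel_right)
    qed
    have orth: "pairwise orthogonal (vec ` E)"
    proof (rule pairwiseI, clarify)
      fix c d assume cd: "c \<in> E" "d \<in> E" "vec c \<noteq> vec d"
      then have "c \<noteq> d" by blast
      have "c * inner (vec c) (vec d) = inner (G *v vec c) (vec d)" using vec[OF cd(1)] by simp
      also have "\<dots> = inner (G *v vec d) (vec c)" by (simp add: hG inner_commute[of "X *v vec c"])
      also have "\<dots> = d * inner (vec c) (vec d)" using vec[OF cd(2)] by (simp add: inner_commute)
      finally have "(c - d) * inner (vec c) (vec d) = 0" by (simp add: algebra_simps)
      then show "orthogonal (vec c) (vec d)" using \<open>c \<noteq> d\<close> by (simp add: orthogonal_def)
    qed
    have "0 \<notin> vec ` E" using vec by auto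
    then have "independent (vec ` E)" using orth pairwise_orthogonal_independent by blast
    then have "finite (vec ` E)" by (rule finiteI_independent)
    then show ?thesis using inj finite_imageD unfolding E_def by blast
  qed
  have muE: "\<mu> \<in> mat_eigenvalues G" unfolding \<mu>_def G_def[symmetric] using fin lamE by (intro Min_in) auto
  show "0 \<le> \<mu>" using Enn[OF muE] .
  have "\<mu> \<le> lam" unfolding \<mu>_def G_def[symmetric] using fin lamE by (rule Min_le)
  then show "\<And>v. \<mu> * inner v v \<le> inner (X *v v) (X *v v)"
    using lam unfolding h_def by (meson dual_order.trans inner_ge_zero mult_right_mono)
qed

lemma cont_mm: "continuous_on S (\<lambda>R. (F R :: real^'k^'m) ** (H R :: real^'n^'k))"
  if "continuous_on S F" "continuous_on S H"
  unfolding matrix_matrix_mult_def using that by (intro continuous_intros)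

lemma cont_tr: "continuous_on S (\<lambda>R. transpose (F R :: real^'n^'m))"
  if "continuous_on S F"
  unfolding transpose_def using that by (intro continuous_intros)

lemma orth_compact: "compact {R::real^'n^'n. orthogonal_matrix R}"
proof (subst compact_eq_bounded_closed, intro conjI)
  have "{R::real^'n^'n. orthogonal_matrix R} = {R. transpose R ** R = mat 1}"
    by (simp add: orthogonal_matrix)
  moreover have "closed {R::real^'n^'n. transpose R ** R = mat 1}"
    by (intro closed_Collect_eq cont_mm cont_tr continuous_on_id continuous_on_const)
  ultimately show "closed {R::real^'n^'n. orthogonal_matrix R}" by simp
  show "bounded {R::real^'n^'n. orthogonal_matrix R}"
    unfolding bounded_iff
  proof (intro exI ballI)
    fix R :: "real^'n^'n" assume "R \<in> {R. orthogonal_matrix R}"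
    then have o: "R ** transpose R = mat 1" by (simp add: orthogonal_matrix_def)
    have "inner R R = (\<Sum>i\<in>UNIV. (R ** transpose R) $ i $ i)"
      by (simp add: frob_inner matrix_matrix_mult_def transpose_def)
    also have "\<dots> = real CARD('n)" using o by (simp add: mat_def)
    finally have "norm R = sqrt (real CARD('n))" by (simp add: norm_eq_sqrt_inner)
    then show "norm R \<le> sqrt (real CARD('n))" by simp
  qed
qed

lemma exists_min_rot:
  fixes Xs X :: "real^'r^'d"
  obtains R where "orthogonal_matrix R" "\<And>Q. orthogonal_matrix Q \<Longrightarrow> norm (X - Xs ** R) \<le> norm (X - Xs ** Q)"
proof -
  have "continuous_on {R::real^'r^'r. orthogonal_matrix R} (\<lambda>R. norm (X - Xs ** R))"
    by (intro continuous_intros cont_mm continuous_on_id continuous_on_const)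
  moreover have "{R::real^'r^'r. orthogonal_matrix R} \<noteq> {}" using orthogonal_matrix_id by blast
  ultimately show ?thesis using continuous_attains_inf[OF orth_compact] that by blast
qed

lemma min_cond:
  fixes Xs X :: "real^'r^'d" and R Q :: "real^'r^'r"
  assumes R: "orthogonal_matrix R"
    and min: "\<And>Q. orthogonal_matrix Q \<Longrightarrow> norm (X - Xs ** R) \<le> norm (X - Xs ** Q)"
    and Q: "orthogonal_matrix Q"
  shows "inner Q (transpose (Xs ** R) ** X) \<le> inner (mat 1) (transpose (Xs ** R) ** X)"
proof -
  define U where "U = Xs ** R"
  have "norm (X - U) \<le> norm (X - U ** Q)"
    using min[OF orthogonal_matrix_mul[OF R Q]] by (simp add: U_def matrix_mul_assoc)
  then have "(norm (X - U))^2 \<le> (norm (X - U ** Q))^2" by (simp add: power_mono)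
  then have le: "inner (X - U) (X - U) \<le> inner (X - U ** Q) (X - U ** Q)" by (simp add: power2_norm_eq_inner)
  have UQ: "inner (U ** Q) (U ** Q) = inner U U"
  proof -
    have "Q ** transpose Q = mat 1" using Q by (simp add: orthogonal_matrix_def)
    then show ?thesis by (simp add: adj2 matrix_mul_assoc[symmetric])
  qed
  have "inner X (U ** Q) \<le> inner X U"
    using le UQ by (simp add: inner_diff_left inner_diff_right inner_commute[of U X] inner_commute[of "U ** Q" X])
  moreover have "inner X (U ** Q) = inner Q (transpose U ** X)" by (metis adj1 inner_commute)
  moreover have "inner X U = inner (mat 1) (transpose U ** X)"
    using adj1[of U "mat 1" X] by (simp add: inner_commute)
  ultimately show ?thesis by (simp add: U_def)
qed

lemma orth_trans_cond:
  fixes P :: "real^'n^'n" and f :: "real^'n \<Rightarrow> real^'n"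
  assumes H: "\<And>Q. orthogonal_matrix Q \<Longrightarrow> inner Q P \<le> inner (mat 1) P"
    and f: "orthogonal_transformation f"
  shows "(\<Sum>j\<in>UNIV. inner (f (axis j 1)) (P *v axis j 1)) \<le> (\<Sum>j\<in>UNIV. inner (axis j 1) (P *v axis j 1))"
proof -
  have "orthogonal_matrix (matrix f)" using f orthogonal_transformation_matrix by blast
  from H[OF this] have "inner (matrix f) P \<le> inner (matrix id) P" by (simp add: matrix_id_mat_1)
  then show ?thesis by (simp add: matrix_inner)
qed

lemma sum_lin: fixes P :: "real^'n^'n"
  shows "(\<Sum>j\<in>UNIV. inner ((inner (axis j 1) a) *\<^sub>R b) (P *v axis j 1)) = inner b (P *v a)"
proof -
  have "(\<Sum>j\<in>UNIV. inner ((inner (axis j 1) a) *\<^sub>R b) (P *v axis j 1))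
      = (\<Sum>j\<in>UNIV. inner b ((a$j) *\<^sub>R column j P))"
    by (simp add: inner_axis' matrix_vector_mult_basis)
  also have "\<dots> = inner b (\<Sum>j\<in>UNIV. (a$j) *\<^sub>R column j P)" by (simp add: inner_sum_right)
  also have "\<dots> = inner b (P *v a)" by (simp add: matrix_mult_sum scalar_mult_eq_scaleR)
  finally show ?thesis .
qed

definition refl_v :: "real^'n \<Rightarrow> real^'n \<Rightarrow> real^'n" where
  "refl_v w x = x - (2 * inner x w / inner w w) *\<^sub>R w"

lemma inner_two_diff: "inner (v - a *\<^sub>R w) (u - b *\<^sub>R w) = inner v u - b * inner v w - a * inner w u + a * b * inner w w"
  for v u w :: "'a::real_inner"
  by (simp add: inner_diff_left inner_diff_right right_diff_distrib)

lemma refl_orth: "orthogonal_transformation (refl_v w)"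
proof (cases "w = 0")
  case True
  then show ?thesis by (simp add: refl_v_def[abs_def])
next
  case False
  then have n: "inner w w \<noteq> 0" by simp
  show ?thesis unfolding orthogonal_transformation_def
  proof
    show "linear (refl_v w)"
    proof (rule linearI)
      fix x y
      have "(2 * inner (x + y) w / inner w w) *\<^sub>R w = (2 * inner x w / inner w w) *\<^sub>R w + (2 * inner y w / inner w w) *\<^sub>R w"
        by (simp add: inner_add_left distrib_left add_divide_distrib scaleR_add_left)
      then show "refl_v w (x + y) = refl_v w x + refl_v w y"
        unfolding refl_v_def by (simp add: algebra_simps)
      fix c
      show "refl_v w (c *\<^sub>R x) = c *\<^sub>R refl_v w x"
        unfolding refl_v_def by (simp add: scaleR_diff_right)
    qed
    show "\<forall>v u. inner (refl_v w v) (refl_v w u) = inner v u"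
    proof (intro allI)
      fix v u
      have "inner (refl_v w v) (refl_v w u) = inner v u - (2 * inner u w / inner w w) * inner v w
          - (2 * inner v w / inner w w) * inner w u + (2 * inner v w / inner w w) * (2 * inner u w / inner w w) * inner w w"
        unfolding refl_v_def by (rule inner_two_diff)
      also have "\<dots> = inner v u" using n by (simp add: field_simps inner_commute[of w u])
      finally show "inner (refl_v w v) (refl_v w u) = inner v u" .
    qed
  qed
qed

lemma single_sum: fixes P :: "real^'n^'n"
  shows "(\<Sum>j\<in>UNIV. inner (refl_v w (axis j 1)) (P *v axis j 1))
     = (\<Sum>j\<in>UNIV. inner (axis j 1) (P *v axis j 1)) - (2 / inner w w) * inner w (P *v w)"
proof -
  have fe: "\<And>j. refl_v w (axis j 1) = axis j 1 + (inner (axis j 1) w) *\<^sub>R ((-(2 / inner w w)) *\<^sub>R w)"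
    by (simp add: refl_v_def)
  have "(\<Sum>j\<in>UNIV. inner (refl_v w (axis j 1)) (P *v axis j 1))
     = (\<Sum>j\<in>UNIV. inner (axis j 1) (P *v axis j 1)) + (\<Sum>j\<in>UNIV. inner ((inner (axis j 1) w) *\<^sub>R ((-(2 / inner w w)) *\<^sub>R w)) (P *v axis j 1))"
    by (simp only: fe inner_add_left sum.distrib)
  also have "\<dots> = (\<Sum>j\<in>UNIV. inner (axis j 1) (P *v axis j 1)) + inner ((-(2 / inner w w)) *\<^sub>R w) (P *v w)"
    by (simp only: sum_lin)
  finally show ?thesis by simp
qed

lemma comp_sum: fixes P :: "real^'n^'n"
  shows "(\<Sum>j\<in>UNIV. inner (refl_v u (refl_v w (axis j 1))) (P *v axis j 1))
     = (\<Sum>j\<in>UNIV. inner (axis j 1) (P *v axis j 1)) - (2 / inner u u) * inner u (P *v u)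
       - (2 / inner w w) * inner (refl_v u w) (P *v w)"
proof -
  have lin: "linear (refl_v u)" using refl_orth orthogonal_transformation_def by blast
  have fe: "\<And>j. refl_v u (refl_v w (axis j 1)) = refl_v u (axis j 1) + (inner (axis j 1) w) *\<^sub>R ((-(2 / inner w w)) *\<^sub>R refl_v u w)"
  proof -
    fix j :: 'n
    have "refl_v u (refl_v w (axis j 1)) = refl_v u (axis j 1) - (2 * inner (axis j 1) w / inner w w) *\<^sub>R refl_v u w"
      unfolding refl_v_def[of w] by (simp add: linear_diff[OF lin] linear_scale[OF lin])
    then show "refl_v u (refl_v w (axis j 1)) = refl_v u (axis j 1) + (inner (axis j 1) w) *\<^sub>R ((-(2 / inner w w)) *\<^sub>R refl_v u w)"
      by simp
  qed
  have "(\<Sum>j\<in>UNIV. inner (refl_v u (refl_v w (axis j 1))) (P *v axis j 1))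
     = (\<Sum>j\<in>UNIV. inner (refl_v u (axis j 1)) (P *v axis j 1)) + (\<Sum>j\<in>UNIV. inner ((inner (axis j 1) w) *\<^sub>R ((-(2 / inner w w)) *\<^sub>R refl_v u w)) (P *v axis j 1))"
    by (simp only: fe inner_add_left sum.distrib)
  also have "\<dots> = (\<Sum>j\<in>UNIV. inner (refl_v u (axis j 1)) (P *v axis j 1)) + inner ((-(2 / inner w w)) *\<^sub>R refl_v u w) (P *v w)"
    by (simp only: sum_lin)
  finally show ?thesis by (simp add: single_sum)
qed

lemma psd_sym:
  fixes P :: "real^'n^'n"
  assumes H: "\<And>Q. orthogonal_matrix Q \<Longrightarrow> inner Q P \<le> inner (mat 1) P"
  shows "\<And>w. 0 \<le> inner w (P *v w)" and "transpose P = P"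
proof -
  define tr where "tr = (\<Sum>j\<in>UNIV. inner (axis j 1) (P *v axis j 1))"
  show psd: "\<And>w. 0 \<le> inner w (P *v w)"
  proof -
    fix w :: "real^'n"
    show "0 \<le> inner w (P *v w)"
    proof (cases "w = 0")
      case True then show ?thesis by simp
    next
      case False
      then have n: "inner w w > 0" by simp
      have "tr - (2 / inner w w) * inner w (P *v w) \<le> tr"
        using orth_trans_cond[OF H refl_orth[of w]] single_sum[of w P] unfolding tr_def by simp
      then have "0 \<le> (2 / inner w w) * inner w (P *v w)" by simp
      then show ?thesis using n by (simp add: zero_le_mult_iff zero_le_divide_iff)
    qed
  qed
  have C2: "\<And>u w. inner u u = 1 \<Longrightarrow>
      2 * inner w u * inner u (P *v w) \<le> inner w (P *v w) + inner w w * inner u (P *v u)"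
  proof -
    fix u w :: "real^'n" assume u: "inner u u = 1"
    show "2 * inner w u * inner u (P *v w) \<le> inner w (P *v w) + inner w w * inner u (P *v u)"
    proof (cases "w = 0")
      case True then show ?thesis using psd[of u] by simp
    next
      case False
      then have n: "inner w w > 0" by simp
      have o: "orthogonal_transformation (refl_v u \<circ> refl_v w)"
        by (intro orthogonal_transformation_compose refl_orth)
      have "tr - 2 * inner u (P *v u) - (2 / inner w w) * inner (refl_v u w) (P *v w) \<le> tr"
        using orth_trans_cond[OF H o] comp_sum[of u w P] u unfolding tr_def by simp
      moreover have "inner (refl_v u w) (P *v w) = inner w (P *v w) - 2 * inner w u * inner u (P *v w)"
        using u by (simp add: refl_v_def inner_diff_left)
      ultimately have "0 \<le> 2 * inner u (P *v u) + (2 / inner w w) * (inner w (P *v w) - 2 * inner w u * inner u (P *v w))"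
        by simp
      then have "0 \<le> inner w w * (2 * inner u (P *v u) + (2 / inner w w) * (inner w (P *v w) - 2 * inner w u * inner u (P *v w)))"
        using n by simp
      moreover have "inner w w * (2 * inner u (P *v u) + (2 / inner w w) * (inner w (P *v w) - 2 * inner w u * inner u (P *v w)))
          = 2 * (inner w w * inner u (P *v u) + inner w (P *v w) - 2 * inner w u * inner u (P *v w))"
        using n by (simp add: distrib_left)
      ultimately have "0 \<le> 2 * (inner w w * inner u (P *v u) + inner w (P *v w) - 2 * inner w u * inner u (P *v w))"
        by simp
      then show ?thesis by simp
    qed
  qed
  have symu: "\<And>u z. inner u u = 1 \<Longrightarrow> inner u (P *v z) = inner z (P *v u)"
  proof -
    fix u z :: "real^'n" assume u: "inner u u = 1"
    define a where "a = inner u z"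
    define b where "b = inner u (P *v u)"
    define c where "c = inner u (P *v z)"
    define c' where "c' = inner z (P *v u)"
    define d where "d = inner z (P *v z)"
    define zz where "zz = inner z z"
    have "\<And>t. 0 \<le> t * (c' - c) + t^2 * (d + zz * b - 2 * a * c)"
    proof -
      fix t :: real
      have e1: "inner (u + t *\<^sub>R z) (u + t *\<^sub>R z) = 1 + 2 * t * a + t^2 * zz"
        using u by (simp add: inner_sq_exp a_def zz_def)
      have e2: "inner (u + t *\<^sub>R z) u = 1 + t * a"
        using u by (simp add: inner_add_left a_def inner_commute[of z u])
      have e3: "inner u (P *v (u + t *\<^sub>R z)) = b + t * c"
        by (simp add: matrix_vector_right_distrib matrix_vector_mult_scaleR inner_add_right b_def c_def)
      have e4: "inner (u + t *\<^sub>R z) (P *v (u + t *\<^sub>R z)) = b + t * c + t * c' + t^2 * d"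
        by (simp add: matrix_vector_right_distrib matrix_vector_mult_scaleR inner_add_right inner_add_left
            b_def c_def c'_def d_def power2_eq_square distrib_left)
      have "2 * (1 + t * a) * (b + t * c) \<le> (b + t * c + t * c' + t^2 * d) + (1 + 2 * t * a + t^2 * zz) * b"
        using C2[OF u, of "u + t *\<^sub>R z"] e1 e2 e3 e4 by (simp add: b_def)
      then show "0 \<le> t * (c' - c) + t^2 * (d + zz * b - 2 * a * c)"
        by (simp add: algebra_simps power2_eq_square)
    qed
    from lin_quad_zero[OF this] show "inner u (P *v z) = inner z (P *v u)" by (simp add: c_def c'_def)
  qed
  have sym: "\<And>u z. inner u (P *v z) = inner z (P *v u)"
  proof -
    fix u z :: "real^'n"
    show "inner u (P *v z) = inner z (P *v u)"
    proof (cases "u = 0")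
      case True then show ?thesis by simp
    next
      case False
      define v where "v = inverse (norm u) *\<^sub>R u"
      have v1: "inner v v = 1" using False by (simp add: v_def dot_square_norm)
      have uv: "u = norm u *\<^sub>R v" using False by (simp add: v_def)
      have "inner u (P *v z) = norm u * inner v (P *v z)" by (subst uv) simp
      also have "\<dots> = norm u * inner z (P *v v)" using symu[OF v1] by simp
      also have "\<dots> = inner z (P *v u)" by (subst (2) uv) (simp add: matrix_vector_mult_scaleR)
      finally show ?thesis .
    qed
  qed
  show "transpose P = P"
  proof -
    have "\<And>i j. P $ i $ j = inner (axis i 1) (P *v axis j 1)"
      by (simp add: matrix_vector_mult_basis inner_axis' column_def)
    then show ?thesis using sym by (simp add: vec_eq_iff transpose_def)
  qed
qed

lemma rank_diff_gram:
  fixes X Y :: "real^'r^'d"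
  shows "rank (X ** transpose X - Y ** transpose Y) \<le> 2 * CARD('r)"
proof -
  define A1 :: "real^('r+'r)^'d" where "A1 = (\<chi> i k. case k of Inl j \<Rightarrow> X$i$j | Inr j \<Rightarrow> - Y$i$j)"
  define B1 :: "real^'d^('r+'r)" where "B1 = (\<chi> k l. case k of Inl j \<Rightarrow> X$l$j | Inr j \<Rightarrow> Y$l$j)"
  have "A1 ** B1 = X ** transpose X - Y ** transpose Y"
  proof -
    have "\<And>i l. (\<Sum>k\<in>UNIV. A1$i$k * B1$k$l) = (\<Sum>j\<in>UNIV. X$i$j * X$l$j) - (\<Sum>j\<in>UNIV. Y$i$j * Y$l$j)"
    proof -
      fix i l
      have "(\<Sum>k\<in>UNIV. A1$i$k * B1$k$l) = (\<Sum>k\<in>UNIV <+> UNIV. A1$i$k * B1$k$l)" by simp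
      also have "\<dots> = (\<Sum>j\<in>UNIV. X$i$j * X$l$j) + (\<Sum>j\<in>UNIV. - Y$i$j * Y$l$j)"
        by (subst sum.Plus) (simp_all add: A1_def B1_def)
      finally show "(\<Sum>k\<in>UNIV. A1$i$k * B1$k$l) = (\<Sum>j\<in>UNIV. X$i$j * X$l$j) - (\<Sum>j\<in>UNIV. Y$i$j * Y$l$j)"
        by (simp add: sum_negf)
    qed
    then show ?thesis by (simp add: vec_eq_iff matrix_matrix_mult_def transpose_def)
  qed
  moreover have "rank (A1 ** B1) \<le> rank B1" by (rule rank_mul_le_right)
  moreover have "rank B1 \<le> CARD('r + 'r)" using rank_bound[of B1] by simp
  moreover have "CARD('r + 'r) = 2 * CARD('r)"
    by (simp add: UNIV_Plus_UNIV[symmetric] card_Plus del: UNIV_Plus_UNIV)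
  ultimately show ?thesis by simp
qed

lemma obj_diff:
  fixes Xs X :: "real^'r^'d" and A :: "real^'d^'d \<Rightarrow> real^'m" and b :: "real^'m" and I :: "'m set"
  assumes lin: "linear A"
    and exact: "\<And>i. i \<notin> I \<Longrightarrow> b $ i = A (Xs ** transpose Xs) $ i"
  shows "(1 / real CARD('m)) * l1_on (- I) (A (X ** transpose X - Xs ** transpose Xs))
       - (1 / real CARD('m)) * l1_on I (A (X ** transpose X - Xs ** transpose Xs))
       \<le> obj_f A b X - obj_f A b Xs"
proof -
  define W where "W = X ** transpose X - Xs ** transpose Xs"
  define p where "p = A (X ** transpose X)"
  define q where "q = A (Xs ** transpose Xs)"
  have AW: "A W = p - q" unfolding W_def p_def q_def by (rule linear_diff[OF lin])
  have split: "\<And>g :: 'm \<Rightarrow> real. (\<Sum>i\<in>UNIV. g i) = (\<Sum>i\<in>I. g i) + (\<Sum>i\<in>-I. g i)"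
  proof -
    fix g :: "'m \<Rightarrow> real"
    have "(\<Sum>i\<in>I \<union> -I. g i) = (\<Sum>i\<in>I. g i) + (\<Sum>i\<in>-I. g i)"
      by (rule sum.union_disjoint) auto
    then show "(\<Sum>i\<in>UNIV. g i) = (\<Sum>i\<in>I. g i) + (\<Sum>i\<in>-I. g i)" by simp
  qed
  have "l1_on (- I) (A W) - l1_on I (A W) \<le> l1_on UNIV (p - b) - l1_on UNIV (q - b)"
  proof -
    have e1: "(\<Sum>i\<in>-I. \<bar>(A W)$i\<bar>) = (\<Sum>i\<in>-I. \<bar>(p - b)$i\<bar> - \<bar>(q - b)$i\<bar>)"
      by (rule sum.cong[OF refl]) (simp add: AW exact q_def)
    have e2: "(\<Sum>i\<in>I. - \<bar>(A W)$i\<bar>) \<le> (\<Sum>i\<in>I. \<bar>(p - b)$i\<bar> - \<bar>(q - b)$i\<bar>)"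
    proof (rule sum_mono)
      fix i assume "i \<in> I"
      have "(A W) $ i = (p - b) $ i - (q - b) $ i" by (simp add: AW)
      then show "- \<bar>(A W)$i\<bar> \<le> \<bar>(p - b)$i\<bar> - \<bar>(q - b)$i\<bar>" by (smt (verit))
    qed
    have "l1_on (- I) (A W) - l1_on I (A W) = (\<Sum>i\<in>-I. \<bar>(A W)$i\<bar>) + (\<Sum>i\<in>I. - \<bar>(A W)$i\<bar>)"
      by (simp add: l1_on_def sum_negf)
    also have "\<dots> \<le> (\<Sum>i\<in>-I. \<bar>(p - b)$i\<bar> - \<bar>(q - b)$i\<bar>) + (\<Sum>i\<in>I. \<bar>(p - b)$i\<bar> - \<bar>(q - b)$i\<bar>)"
      using e1 e2 by simp
    also have "\<dots> = (\<Sum>i\<in>UNIV. \<bar>(p - b)$i\<bar> - \<bar>(q - b)$i\<bar>)" using split by simp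
    also have "\<dots> = l1_on UNIV (p - b) - l1_on UNIV (q - b)" by (simp add: l1_on_def sum_subtractf)
    finally show ?thesis .
  qed
  then have "(1 / real CARD('m)) * (l1_on (- I) (A W) - l1_on I (A W))
      \<le> (1 / real CARD('m)) * (l1_on UNIV (p - b) - l1_on UNIV (q - b))"
    by (rule mult_left_mono) simp
  then show ?thesis by (simp add: obj_f_def W_def p_def q_def right_diff_distrib)
qed

theorem proposition4p6:
  fixes Xs :: "real^'r^'d"
    and A :: "real^'d^'d \<Rightarrow> real^'m"
    and b :: "real^'m"
    and I :: "'m set"
    and \<kappa>3 :: real
  assumes rank_Xs: "rank Xs = CARD('r)"
    and lin: "linear A"
    and kappa_pos: "\<kappa>3 > 0"
    and exact: "\<And>i. i \<notin> I \<Longrightarrow> b $ i = A (Xs ** transpose Xs) $ i"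
    and sharpness: "\<And>W :: real^'d^'d. rank W \<le> 2 * CARD('r) \<Longrightarrow>
        \<kappa>3 * norm W \<le> (1 / real CARD('m)) * l1_on (- I) (A W)
                        - (1 / real CARD('m)) * l1_on I (A W)"
  shows "\<forall>X :: real^'r^'d.
     obj_f A b X - obj_f A b Xs
       \<ge> \<kappa>3 * sqrt (2 * (sqrt 2 - 1)) * sigma_r Xs * infdist X (sol_set Xs)"
proof
  fix X :: "real^'r^'d"
  obtain R where R: "orthogonal_matrix R"
    and Rmin: "\<And>Q. orthogonal_matrix Q \<Longrightarrow> norm (X - Xs ** R) \<le> norm (X - Xs ** Q)"
    using exists_min_rot[of X Xs] by blast
  define U where "U = Xs ** R"
  define P where "P = transpose U ** X"
  define D where "D = X - U"
  define \<mu> where "\<mu> = Min (mat_eigenvalues (transpose Xs ** Xs))"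
  define W where "W = X ** transpose X - Xs ** transpose Xs"
  have H: "\<And>Q. orthogonal_matrix Q \<Longrightarrow> inner Q P \<le> inner (mat 1) P"
    unfolding P_def U_def using min_cond[OF R Rmin] by blast
  note psd = psd_sym(1)[OF H] and Psym = psd_sym(2)[OF H]
  have XUD: "X = U + D" by (simp add: D_def)
  have RRt: "R ** transpose R = mat 1" using R by (simp add: orthogonal_matrix_def)
  have RtR: "transpose R ** R = mat 1" using R by (simp add: orthogonal_matrix_def)
  have UU: "U ** transpose U = Xs ** transpose Xs"
    by (simp add: U_def matrix_transpose_mul matrix_mul_assoc[symmetric]) (simp add: matrix_mul_assoc RRt)
  have Ssym: "transpose (transpose U ** D) = transpose U ** D"
  proof -
    have "P = transpose U ** U + transpose U ** D"
      unfolding P_def by (subst XUD) (simp add: matrix_add_ldistrib)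
    then have "transpose U ** D = P - transpose U ** U" by simp
    moreover have "transpose (P - transpose U ** U) = P - transpose U ** U"
      using Psym by (simp add: vec_eq_iff transpose_def matrix_matrix_mult_def mult.commute)
    ultimately show ?thesis by simp
  qed
  have psd': "\<And>v. 0 \<le> inner v ((transpose U ** (U + D)) *v v)"
    using psd by (simp add: P_def XUD[symmetric])
  have ray: "\<And>v. \<mu> * inner v v \<le> inner (U *v v) (U *v v)"
  proof -
    fix v :: "real^'r"
    have "inner (R *v v) (R *v v) = inner v v"
      using gram_sym[of R v v] RtR by simp
    moreover have "\<mu> * inner (R *v v) (R *v v) \<le> inner (Xs *v (R *v v)) (Xs *v (R *v v))"
      unfolding \<mu>_def by (rule rayleigh(2))
    ultimately show "\<mu> * inner v v \<le> inner (U *v v) (U *v v)"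
      by (simp add: U_def matrix_vector_mul_assoc)
  qed
  have mu0: "0 \<le> \<mu>" unfolding \<mu>_def by (rule rayleigh(1))
  have key: "2 * (sqrt 2 - 1) * \<mu> * inner D D \<le> inner W W"
    using key_ineq[OF Ssym psd' ray] by (simp add: W_def XUD[symmetric] UU)
  have c0: "0 \<le> 2 * (sqrt 2 - 1)" by simp
  have sig: "sigma_r Xs = sqrt \<mu>" by (simp add: sigma_r_def \<mu>_def)
  have normW: "sqrt (2 * (sqrt 2 - 1)) * sigma_r Xs * norm D \<le> norm W"
  proof -
    have "sqrt (2 * (sqrt 2 - 1) * \<mu> * inner D D) \<le> sqrt (inner W W)"
      using key by (rule real_sqrt_le_mono)
    moreover have "sqrt (2 * (sqrt 2 - 1) * \<mu> * inner D D) = sqrt (2 * (sqrt 2 - 1)) * sigma_r Xs * norm D"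
      by (simp add: sig real_sqrt_mult norm_eq_sqrt_inner)
    moreover have "norm W = sqrt (inner W W)" by (rule norm_eq_sqrt_inner)
    ultimately show ?thesis by linarith
  qed
  have dist: "infdist X (sol_set Xs) \<le> norm D"
  proof -
    have "U \<in> sol_set Xs" unfolding sol_set_def U_def using R by blast
    then have "infdist X (sol_set Xs) \<le> dist X U" by (rule infdist_le)
    then show ?thesis by (simp add: dist_norm D_def)
  qed
  have nn: "0 \<le> sqrt (2 * (sqrt 2 - 1)) * sigma_r Xs" using mu0 by (simp add: sig)
  have "\<kappa>3 * sqrt (2 * (sqrt 2 - 1)) * sigma_r Xs * infdist X (sol_set Xs)
      \<le> \<kappa>3 * (sqrt (2 * (sqrt 2 - 1)) * sigma_r Xs * norm D)"
    using mult_left_mono[OF dist nn] kappa_pos by (simp add: mult.assoc)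
  also have "\<dots> \<le> \<kappa>3 * norm W" using normW kappa_pos by simp
  also have "\<dots> \<le> (1 / real CARD('m)) * l1_on (- I) (A W) - (1 / real CARD('m)) * l1_on I (A W)"
    by (rule sharpness) (simp add: W_def rank_diff_gram)
  also have "\<dots> \<le> obj_f A b X - obj_f A b Xs"
    unfolding W_def by (rule obj_diff[OF lin exact])
  finally show "\<kappa>3 * sqrt (2 * (sqrt 2 - 1)) * sigma_r Xs * infdist X (sol_set Xs) \<le> obj_f A b X - obj_f A b Xs" .
qed

end
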